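(* Let $\Lambda\subset\mathbb{C}$ be a lattice. Let $\mathcal{V}\subset\mathbb{R}^2$ be a non-empty subset of the form $\mathcal{V}=V(\mathbb{R})$ for some algebraic subvariety $V\subset\mathbb{A}^2_\mathbb{R}$, such that $\mathcal{V}$ cannot be written as $V_1(\mathbb{R})\cup V_2(\mathbb{R})$ with $V_1,V_2\subset\mathbb{A}^2_\mathbb{R}$ algebraic subvarieties and both inclusions $V_i(\mathbb{R})\subset\mathcal{V}$ proper. If $f(\mathcal{V})$ is contained in a bialgebraic curve for $\wp_{\Lambda\times\overline{\Lambda}}$, where $f(v,w)=(v+iw,v-iw)$, then $\mathcal{V}$ is weakly bialgebraic for $\mathcal{P}_\Lambda$.
   Context: Identify $\mathbb{R}^2$ with $\mathbb{C}$ via $(x,y)\mapsto x+iy$, and $\mathbb{R}^2\subset\mathbb{C}^2$. For a lattice $\Lambda\subset\mathbb{C}$ let $\wp_\Lambda:\mathbb{C}\to\mathbb{P}^1(\mathbb{C})$ be its Weierstrass $\wp$-function and $\mathcal{P}_\Lambda:\mathbb{R}^2\smallsetminus\Lambda\to\mathbb{R}^2$, $(x,y)\mapsto(\mathrm{Re}\,\wp_\Lambda(x+iy),\mathrm{Im}\,\wp_\Lambda(x+iy))$. A non-empty subset $\mathcal{V}\subsetneq\mathbb{R}^2$ is called weakly bialgebraic for $\mathcal{P}_\Lambda$ if (i) there exist algebraic subvarieties $V\subset\mathbb{A}^2_\mathbb{R}$ and $W\subsetneq\mathbb{A}^2_\mathbb{R}$ with $\mathcal{V}=V(\mathbb{R})$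 and $\mathcal{P}_\Lambda(\mathcal{V}\cap(\mathbb{R}^2\smallsetminus\Lambda))\subset W(\mathbb{R})$; and (ii) $\mathcal{V}$ cannot be written as $V_1(\mathbb{R})\cup V_2(\mathbb{R})$ with $V_i$ algebraic subvarieties and $V_i(\mathbb{R})\subsetneq\mathcal{V}$. Let $\wp_{\Lambda\times\overline{\Lambda}}=\wp_\Lambda\times\wp_{\overline{\Lambda}}:\mathbb{C}^2\to\mathbb{P}^1(\mathbb{C})^2$, with $\overline{\Lambda}$ the complex conjugate lattice. An irreducible algebraic curve $C\subset\mathbb{C}^2$ is bialgebraic for $\wp_{\Lambda\times\overline{\Lambda}}$ if $\wp_{\Lambda\times\overline{\Lambda}}(C)$ is not Zariski dense in $\mathbb{P}^1(\mathbb{C})^2$. *)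

theory Defs
  imports "HOL-Analysis.Analysis" "HOL-Computational_Algebra.Polynomial"
    "HOL-Computational_Algebra.Factorial_Ring"
begin

definition is_lattice :: "complex set \<Rightarrow> bool" where
  "is_lattice L \<longleftrightarrow> (\<exists>w1 w2. w1 \<noteq> 0 \<and> Im (w2 / w1) \<noteq> 0 \<and>
      L = {of_int m * w1 + of_int n * w2 | m n. True})"

text \<open>Weierstrass wp-function (meaningful for z outside the lattice).\<close>
definition wp :: "complex set \<Rightarrow> complex \<Rightarrow> complex" where
  "wp L z = 1 / z^2 + infsum (\<lambda>w. 1 / (z - w)^2 - 1 / w^2) (L - {0})"

definition wpR :: "complex set \<Rightarrow> real \<times> real \<Rightarrow> real \<times> real" where
  "wpR L p = (Re (wp L (Complex (fst p) (snd p))), Im (wp L (Complex (fst p) (snd p))))"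

text \<open>Bivariate polynomials are represented as 'a poly poly; P(x,y) = eval2 P x y.\<close>
definition eval2 :: "'a::comm_semiring_1 poly poly \<Rightarrow> 'a \<Rightarrow> 'a \<Rightarrow> 'a" where
  "eval2 P x y = poly (poly P [:y:]) x"

definition real_alg_set :: "(real \<times> real) set \<Rightarrow> bool" where
  "real_alg_set S \<longleftrightarrow> (\<exists>F. finite F \<and> S = {(x, y). \<forall>P\<in>F. eval2 P x y = 0})"

definition proper_real_alg_set :: "(real \<times> real) set \<Rightarrow> bool" where
  "proper_real_alg_set S \<longleftrightarrow> (\<exists>F. finite F \<and> (\<exists>P\<in>F. P \<noteq> 0) \<and>
      S = {(x, y). \<forall>P\<in>F. eval2 P x y = 0})"

definition real_alg_indecomposable :: "(real \<times> real) set \<Rightarrow> bool" where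
  "real_alg_indecomposable S \<longleftrightarrow>
     \<not> (\<exists>V1 V2. real_alg_set V1 \<and> real_alg_set V2 \<and> V1 \<subset> S \<and> V2 \<subset> S \<and> S = V1 \<union> V2)"

definition weakly_bialgebraic :: "complex set \<Rightarrow> (real \<times> real) set \<Rightarrow> bool" where
  "weakly_bialgebraic L S \<longleftrightarrow>
     S \<noteq> {} \<and> S \<noteq> UNIV \<and> real_alg_set S \<and>
     (\<exists>W. proper_real_alg_set W \<and>
          wpR L ` {p \<in> S. Complex (fst p) (snd p) \<notin> L} \<subseteq> W) \<and>
     real_alg_indecomposable S"

definition irred_alg_curve :: "(complex \<times> complex) set \<Rightarrow> bool" where
  "irred_alg_curve C \<longleftrightarrow> (\<exists>Q. irreducible Q \<and> C = {(z1, z2). eval2 Q z1 z2 = 0})"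

text \<open>Bialgebraic curve for wp_L \<times> wp_(conj L): the image (on the non-polar part)
  lies in the zero set of a nonzero polynomial, i.e. is not Zariski dense.\<close>
definition bialgebraic_curve :: "complex set \<Rightarrow> (complex \<times> complex) set \<Rightarrow> bool" where
  "bialgebraic_curve L C \<longleftrightarrow> irred_alg_curve C \<and>
     (\<exists>R. R \<noteq> 0 \<and> (\<forall>(z1, z2)\<in>C. z1 \<notin> L \<longrightarrow> z2 \<notin> cnj ` L \<longrightarrow>
          eval2 R (wp L z1) (wp (cnj ` L) z2) = 0))"

definition fmap :: "real \<times> real \<Rightarrow> complex \<times> complex" where
  "fmap p = (Complex (fst p) (snd p), Complex (fst p) (- snd p))"

end

theory Submission imports Defs "HOL-Complex_Analysis.Complex_Analysis" begin

lemma eval2_pCons: "eval2 (pCons a P) x y = poly a x + y * eval2 P x y"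
  by (simp add: eval2_def)

lemma eval2_holo:
  assumes "f holomorphic_on UNIV" "g holomorphic_on UNIV"
  shows "(\<lambda>s. eval2 (P::complex poly poly) (f s) (g s)) holomorphic_on UNIV"
proof (induction P)
  case 0 then show ?case by (simp add: eval2_def)
next
  case (pCons a P)
  have "(\<lambda>s. poly a (f s)) holomorphic_on UNIV"
    using assms(1) by (intro holomorphic_intros)
  then show ?case unfolding eval2_pCons using pCons assms by (intro holomorphic_intros) auto
qed

lemma zero_limpt_reals: "(0::complex) islimpt \<real>"
proof -
  have "(0::complex) islimpt of_real ` UNIV"
  proof (rule islimptI)
    fix T assume "(0::complex) \<in> T" "open T"
    then obtain e where e: "e > 0" "ball 0 e \<subseteq> T" using open_contains_ball by blast
    then have "complex_of_real (e/2) \<in> T" by (auto simp: dist_norm)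
    moreover have "complex_of_real (e/2) \<noteq> 0" using e by simp
    ultimately show "\<exists>y\<in>of_real ` UNIV. y \<in> T \<and> y \<noteq> 0" by blast
  qed
  then show ?thesis by (simp add: Reals_def)
qed

lemma entire_zero_on_reals:
  assumes "h holomorphic_on UNIV" "\<And>x. h (complex_of_real x) = 0"
  shows "h w = 0"
  apply (rule analytic_continuation[OF assms(1) open_UNIV connected_UNIV subset_UNIV UNIV_I zero_limpt_reals])
  using assms(2) by (auto elim: Reals_cases)

lemma eval2_conj_zero:
  assumes "\<And>z. eval2 (P::complex poly poly) z (cnj z) = 0"
  shows "eval2 P z w = 0"
proof -
  have h1: "eval2 P (s + \<i> * complex_of_real t) (s - \<i> * complex_of_real t) = 0" for s t
  proof (rule entire_zero_on_reals[where h="\<lambda>s. eval2 P (s + \<i> * complex_of_real t) (s - \<i> * complex_of_real t)"])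
    show "(\<lambda>s. eval2 P (s + \<i> * complex_of_real t) (s - \<i> * complex_of_real t)) holomorphic_on UNIV"
      by (intro eval2_holo holomorphic_intros)
    fix x
    have "cnj (of_real x + \<i> * complex_of_real t) = of_real x - \<i> * complex_of_real t"
      by (simp add: complex_eq_iff)
    then show "eval2 P (of_real x + \<i> * complex_of_real t) (of_real x - \<i> * complex_of_real t) = 0"
      using assms[of "of_real x + \<i> * complex_of_real t"] by simp
  qed
  have h2: "eval2 P (s + \<i> * t) (s - \<i> * t) = 0" for s t
  proof (rule entire_zero_on_reals[where h="\<lambda>t. eval2 P (s + \<i> * t) (s - \<i> * t)"])
    show "(\<lambda>t. eval2 P (s + \<i> * t) (s - \<i> * t)) holomorphic_on UNIV"
      by (intro eval2_holo holomorphic_intros)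
  qed (rule h1)
  have "z = (z+w)/2 + \<i> * ((z-w)/(2*\<i>))" "w = (z+w)/2 - \<i> * ((z-w)/(2*\<i>))"
    by (auto simp: field_simps)
  then show ?thesis using h2[of "(z+w)/2" "(z-w)/(2*\<i>)"] by metis
qed

lemma eval2_all_zero:
  assumes "\<And>z w. eval2 (P::complex poly poly) z w = 0"
  shows "P = 0"
proof (rule ccontr)
  assume "P \<noteq> 0"
  then have fin: "finite {x. poly P x = 0}" by (rule poly_roots_finite)
  have "poly P [:w:] = 0" for w
    using assms[of _ w] poly_all_0_iff_0[of "poly P [:w:]"] by (simp add: eval2_def)
  then have "range (\<lambda>w. [:w:]) \<subseteq> {x. poly P x = 0}" by auto
  moreover have "infinite (range (\<lambda>w::complex. [:w:]))"
  proof
    assume "finite (range (\<lambda>w::complex. [:w:]))"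
    then have "finite (UNIV::complex set)" by (rule finite_imageD) (auto simp: inj_on_def)
    then show False by (simp add: infinite_UNIV_char_0)
  qed
  ultimately show False using fin finite_subset by blast
qed

lemma eval2_add: "eval2 (P + Q) x y = eval2 P x y + eval2 Q x y"
  by (simp add: eval2_def)
lemma eval2_mult: "eval2 (P * Q) x y = eval2 P x y * eval2 Q x y"
  by (simp add: eval2_def)
lemma eval2_diff: "eval2 (P - Q) x y = eval2 P x y - (eval2 Q x y :: 'a::comm_ring_1)"
  by (simp add: eval2_def)
lemma eval2_const: "eval2 [:[:c:]:] x y = c"
  by (simp add: eval2_def)
lemma eval2_X: "eval2 [:[:0,1:]:] x y = x"
  by (simp add: eval2_def)
lemma eval2_Y: "eval2 [:0,1:] x y = y"
  by (simp add: eval2_def)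

lemma subst_poly1: "\<exists>G. \<forall>a b. eval2 G a b = poly (c::complex poly) (a + \<i> * b)"
proof (induction c)
  case 0 then show ?case by (rule exI[of _ 0]) (simp add: eval2_def)
next
  case (pCons d c)
  then obtain G where G: "\<forall>a b. eval2 G a b = poly c (a + \<i> * b)" by blast
  show ?case
    apply (rule exI[of _ "[:[:d:]:] + ([:[:0,1:]:] + [:[:\<i>:]:]*[:0,1:]) * G"])
    apply (intro allI)
    unfolding eval2_add eval2_mult eval2_const eval2_X eval2_Y G[rule_format]
    by (simp add: algebra_simps)
qed

lemma subst_poly2: "\<exists>G. \<forall>a b. eval2 G a b = eval2 (R::complex poly poly) (a + \<i> * b) (a - \<i> * b)"
proof (induction R)
  case 0 then show ?case by (rule exI[of _ 0]) (simp add: eval2_def)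
next
  case (pCons c R)
  then obtain G where G: "\<forall>a b. eval2 G a b = eval2 R (a + \<i> * b) (a - \<i> * b)" by blast
  obtain H where H: "\<forall>a b. eval2 H a b = poly c (a + \<i> * b)" using subst_poly1 by blast
  show ?case
    apply (rule exI[of _ "H + ([:[:0,1:]:] - [:[:\<i>:]:]*[:0,1:]) * G"])
    apply (intro allI)
    unfolding eval2_pCons[of c R]
    unfolding eval2_add eval2_mult eval2_diff eval2_const eval2_X eval2_Y G[rule_format] H[rule_format]
    by (simp add: algebra_simps)
qed

lemma poly_re_im: "poly (c::complex poly) (of_real x) = Complex (poly (map_poly Re c) x) (poly (map_poly Im c) x)"
proof (induction c)
  case 0 then show ?case by (simp add: complex_eq_iff)
next
  case (pCons d c)
  then show ?case by (simp add: map_poly_pCons complex_eq_iff)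
qed

lemma eval2_re_im: "eval2 (G::complex poly poly) (of_real x) (of_real y) =
   Complex (eval2 (map_poly (map_poly Re) G) x y) (eval2 (map_poly (map_poly Im) G) x y)"
proof (induction G)
  case 0 then show ?case by (simp add: complex_eq_iff eval2_def)
next
  case (pCons d G)
  then show ?case by (simp add: map_poly_pCons complex_eq_iff eval2_pCons poly_re_im)
qed

lemma wp_cnj: "wp (cnj ` L) (cnj z) = cnj (wp L z)"
proof -
  have e: "cnj ` L - {0} = cnj ` (L - {0})" by (auto simp: image_iff)
  have "infsum (\<lambda>w. 1 / (cnj z - w)^2 - 1 / w^2) (cnj ` (L - {0}))
      = infsum ((\<lambda>w. 1 / (cnj z - w)^2 - 1 / w^2) \<circ> cnj) (L - {0})"
    by (rule infsum_reindex) (auto simp: inj_on_def)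
  also have "((\<lambda>w. 1 / (cnj z - w)^2 - 1 / w^2) \<circ> cnj) = (\<lambda>w. cnj (1 / (z - w)^2 - 1 / w^2))"
    by (simp add: o_def)
  also have "infsum (\<lambda>w. cnj (1 / (z - w)^2 - 1 / w^2)) (L - {0}) = cnj (infsum (\<lambda>w. 1 / (z - w)^2 - 1 / w^2) (L - {0}))"
    by (rule infsum_cnj)
  finally show ?thesis unfolding wp_def e by simp
qed

theorem lemma2p3p4:
  fixes L :: "complex set" and S :: "(real \<times> real) set" and C :: "(complex \<times> complex) set"
  assumes "is_lattice L"
    and "S \<noteq> {}"
    and "real_alg_set S"
    and "real_alg_indecomposable S"
    and "bialgebraic_curve L C"
    and "fmap ` S \<subseteq> C"
  shows "weakly_bialgebraic L S"
proof -
  from assms(5) obtain Q R where Q: "irreducible Q" "C = {(z1, z2). eval2 Q z1 z2 = 0}"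
    and R: "R \<noteq> 0" "\<forall>(z1, z2)\<in>C. z1 \<notin> L \<longrightarrow> z2 \<notin> cnj ` L \<longrightarrow>
          eval2 R (wp L z1) (wp (cnj ` L) z2) = 0"
    unfolding bialgebraic_curve_def irred_alg_curve_def by blast
  have fm: "fmap (x, y) = (Complex x y, cnj (Complex x y))" for x y
    by (simp add: fmap_def complex_eq_iff)
  have notU: "S \<noteq> UNIV"
  proof
    assume "S = UNIV"
    have "eval2 Q z (cnj z) = 0" for z
    proof -
      have "fmap (Re z, Im z) \<in> C" using assms(6) \<open>S = UNIV\<close> by auto
      then show ?thesis using Q(2) fm[of "Re z" "Im z"] by simp
    qed
    then have "Q = 0" using eval2_conj_zero eval2_all_zero by metis
    then show False using Q(1) by simp
  qed
  obtain G where G: "\<forall>a b. eval2 G a b = eval2 R (a + \<i> * b) (a - \<i> * b)"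
    using subst_poly2 by blast
  define A where "A = map_poly (map_poly Re) G"
  define B where "B = map_poly (map_poly Im) G"
  have GAB: "eval2 R (Complex x y) (cnj (Complex x y)) = Complex (eval2 A x y) (eval2 B x y)" for x y
  proof -
    have "Complex x y = of_real x + \<i> * of_real y" "cnj (Complex x y) = of_real x - \<i> * of_real y"
      by (simp_all add: complex_eq_iff)
    then show ?thesis using G eval2_re_im[of G x y] unfolding A_def B_def by simp
  qed
  have nz: "\<exists>P\<in>{A, B}. P \<noteq> 0"
  proof (rule ccontr)
    assume "\<not> ?thesis"
    then have "A = 0" "B = 0" by auto
    then have "eval2 R z (cnj z) = 0" for z
      using GAB[of "Re z" "Im z"] by (simp add: eval2_def complex_eq_iff)
    then have "R = 0" using eval2_conj_zero eval2_all_zero by metis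
    then show False using R(1) by simp
  qed
  have img: "wpR L ` {p \<in> S. Complex (fst p) (snd p) \<notin> L} \<subseteq> {(x, y). \<forall>P\<in>{A, B}. eval2 P x y = 0}"
  proof
    fix q assume "q \<in> wpR L ` {p \<in> S. Complex (fst p) (snd p) \<notin> L}"
    then obtain x y where p: "(x, y) \<in> S" "Complex x y \<notin> L" and q: "q = wpR L (x, y)" by auto
    define z where "z = Complex x y"
    have "fmap (x, y) \<in> C" using p assms(6) by auto
    then have inC: "(z, cnj z) \<in> C" using fm z_def by simp
    have "cnj z \<notin> cnj ` L" using p(2) z_def by (auto simp: image_iff)
    then have "eval2 R (wp L z) (wp (cnj ` L) (cnj z)) = 0" using R(2) inC p(2) z_def by auto
    then have "eval2 R (wp L z) (cnj (wp L z)) = 0" by (simp add: wp_cnj)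
    then have "Complex (eval2 A (Re (wp L z)) (Im (wp L z))) (eval2 B (Re (wp L z)) (Im (wp L z))) = 0"
      using GAB[of "Re (wp L z)" "Im (wp L z)"] by simp
    then show "q \<in> {(x, y). \<forall>P\<in>{A, B}. eval2 P x y = 0}"
      by (simp add: q wpR_def z_def complex_eq_iff)
  qed
  have W: "proper_real_alg_set {(x, y). \<forall>P\<in>{A, B}. eval2 P x y = 0}"
    unfolding proper_real_alg_set_def
    apply (rule exI[of _ "{A, B}"])
    using nz by simp
  show ?thesis unfolding weakly_bialgebraic_def
    apply (intro conjI assms(2,3,4) notU)
    apply (rule exI[of _ "{(x, y). \<forall>P\<in>{A, B}. eval2 P x y = 0}"])
    using W img by simp
qed

end
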